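(* Let $d>1$ be an integer. There is a constant $K>0$ such that for all $\epsilon\in(0,1)$ and $r>1$: if $p$ is a monic polynomial of degree $d$ and $\alpha\in\mathbb{C}$ is such that all roots $z_1,\dots,z_d$ of $p(z)=\alpha$ lie in $\mathbb{D}_r(0)$ and $\operatorname{dist}(\{z_1,\dots,z_d\},\operatorname{Crit}(p))>\epsilon$, then $|z_i-z_j|>K(\epsilon/r)^{d^2}$ for all $1\le i<j\le d$.
   Context: $\operatorname{Crit}(p)$ is the set of critical points of $p$; $\operatorname{dist}$ is the Euclidean distance between sets. *)

theory Defs
  imports "HOL-Analysis.Analysis" "HOL-Computational_Algebra.Polynomial"
begin

definition Crit :: "complex poly \<Rightarrow> complex set" where
  "Crit p = {z. poly (pderiv p) z = 0}"

end

theory Submission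
  imports Defs "HOL-Computational_Algebra.Fundamental_Theorem_Algebra"
begin

lemma deriv_lower:
  fixes p :: "complex poly" and z :: complex and e :: real
  assumes dg: "degree p = d" and lc: "lead_coeff p = 1" and d1: "d > 1"
    and far: "\<And>c. poly (pderiv p) c = 0 \<Longrightarrow> e \<le> cmod (z - c)" and e0: "0 < e"
  shows "real d * e ^ (d - 1) \<le> cmod (poly (pderiv p) z)"
proof -
  define q where "q = pderiv p"
  have dq: "degree q = d - 1" unfolding q_def by (simp add: degree_pderiv dg)
  have lq: "coeff q (d - Suc 0) = of_nat d"
    using d1 dg lc unfolding q_def by (simp add: coeff_pderiv)
  obtain root where rt: "smult (lead_coeff q) (\<Prod>i<degree q. [:-root i, 1:]) = q"
    using complex_poly_decompose' by blast
  have pz: "poly q x = of_nat d * (\<Prod>i<d-1. x - root i)" for x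
    using arg_cong[OF rt, of "\<lambda>f. poly f x"] by (simp add: poly_prod lq dq)
  have isroot: "poly q (root i) = 0" if "i < d - 1" for i
    unfolding pz using that by (auto intro: prod_zero)
  have "e ^ (d-1) = (\<Prod>i<d-1. e)" by simp
  also have "\<dots> \<le> (\<Prod>i<d-1. cmod (z - root i))"
    by (intro prod_mono) (use e0 far isroot q_def in auto)
  finally have "real d * e ^ (d-1) \<le> real d * (\<Prod>i<d-1. cmod (z - root i))"
    by (simp add: mult_left_mono)
  also have "\<dots> = cmod (poly q z)" by (simp add: pz norm_mult prod_norm)
  finally show ?thesis by (simp add: q_def)
qed

lemma deriv_upper:
  fixes q :: "complex poly" and z w :: complex and r :: real
  assumes dg: "degree q = d" and lc: "lead_coeff q = 1"
    and sf: "rsquarefree q"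
    and inb: "\<And>x. poly q x = 0 \<Longrightarrow> cmod x < r"
    and z: "poly q z = 0" and w: "poly q w = 0" and zw: "z \<noteq> w"
  shows "cmod (poly (pderiv q) z) \<le> cmod (z - w) * (2*r) ^ (d - 2)"
proof -
  define S where "S = {x. poly q x = 0}"
  have q0: "q \<noteq> 0" using sf by (simp add: rsquarefree_def)
  have fin: "finite S" unfolding S_def using q0 by (rule poly_roots_finite)
  have qe: "q = (\<Prod>x\<in>S. [:-x, 1:])"
    using complex_poly_decompose_rsquarefree[OF sf] lc by (simp add: S_def)
  have "degree q = card S"
    by (subst qe, subst degree_prod_sum_eq) auto
  hence cS: "card S = d" using dg by simp
  have zS: "z \<in> S" and wS: "w \<in> S" using z w by (auto simp: S_def)
  define g where "g = (\<Prod>x\<in>S-{z}. [:-x, 1:])"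
  have "q = [:-z,1:] * g" unfolding g_def
    by (subst qe, subst prod.remove[OF fin zS]) simp
  hence "pderiv q = pderiv [:-z,1:] * g + [:-z,1:] * pderiv g"
    by (simp only: pderiv_mult ac_simps)
  moreover have "pderiv [:-z,1:] = 1" by (simp add: pderiv_pCons)
  ultimately have "poly (pderiv q) z = poly g z" by simp
  also have "\<dots> = (\<Prod>x\<in>S-{z}. z - x)" by (simp add: g_def poly_prod)
  also have "\<dots> = (z - w) * (\<Prod>x\<in>S-{z}-{w}. z - x)"
    by (rule prod.remove) (use fin wS zw in auto)
  finally have eq: "cmod (poly (pderiv q) z) = cmod (z - w) * (\<Prod>x\<in>S-{z}-{w}. cmod (z - x))"
    by (simp add: norm_mult prod_norm)
  have cd: "card (S-{z}-{w}) = d - 2"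
    using cS fin zS wS zw by (simp add: card_Diff_singleton)
  have "(\<Prod>x\<in>S-{z}-{w}. cmod (z - x)) \<le> (\<Prod>x\<in>S-{z}-{w}. 2*r)"
  proof (rule prod_mono)
    fix x assume "x \<in> S-{z}-{w}"
    hence "cmod x < r" using inb by (auto simp: S_def)
    moreover have "cmod z < r" using inb z by auto
    ultimately show "0 \<le> cmod (z - x) \<and> cmod (z - x) \<le> 2*r"
      using norm_triangle_ineq4[of z x] by auto
  qed
  also have "(\<Prod>x\<in>S-{z}-{w}. 2*r) = (2*r) ^ (d-2)" using cd by simp
  finally show ?thesis unfolding eq by (simp add: mult_left_mono)
qed

lemma final_arith:
  fixes e r x :: real and d :: nat
  assumes d1: "d > 1" and e0: "0 < e" and e1: "e < 1" and r1: "r > 1"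
    and h: "real d * e ^ (d - 1) \<le> x * (2*r) ^ (d - 2)"
  shows "x > (1/2^d) * (e/r) ^ (d^2)"
proof -
  have dd: "d - 1 \<le> d^2" "d - 2 \<le> d^2" by (auto simp: power2_eq_square) (metis diff_le_self le_trans le_square)+
  have a: "e ^ (d^2) \<le> e ^ (d-1)" by (rule power_decreasing) (use dd e0 e1 in auto)
  have b: "r ^ (d-2) \<le> r ^ (d^2)" by (rule power_increasing) (use dd r1 in auto)
  have rp: "r ^ (d-2) > 0" "r ^ (d^2) > 0" using r1 by auto
  have "(e/r) ^ (d^2) = e ^ (d^2) / r ^ (d^2)" by (simp add: power_divide)
  also have "\<dots> \<le> e ^ (d-1) / r ^ (d-2)"
    using a b rp e0 by (intro frac_le) auto
  finally have y: "(e/r) ^ (d^2) * r ^ (d-2) \<le> e ^ (d-1)"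
    using rp by (simp add: pos_le_divide_eq)
  have p2: "(2::real) ^ d = 2 ^ (d-2) * 4"
  proof -
    obtain k where "d = k + 2" using d1 by (metis add.commute le_Suc_ex Suc_leI one_add_one plus_1_eq_Suc)
    thus ?thesis by (simp add: power_add)
  qed
  have "(1/2^d) * (e/r) ^ (d^2) * (2*r) ^ (d-2) = ((e/r) ^ (d^2) * r ^ (d-2)) / 4"
    by (simp add: p2 power_mult_distrib)
  also have "\<dots> \<le> e ^ (d-1) / 4" using y by simp
  also have "\<dots> < real d * e ^ (d-1)" using d1 e0 by simp
  also have "\<dots> \<le> x * (2*r) ^ (d-2)" by (rule h)
  finally have f: "(1/2^d) * (e/r) ^ (d^2) * (2*r) ^ (d-2) < x * (2*r) ^ (d-2)" .
  have "(2*r) ^ (d-2) \<ge> 0" using r1 by simp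
  from mult_right_less_imp_less[OF f this] show ?thesis .
qed

theorem lemmaA3:
  fixes d :: nat
  assumes "d > 1"
  shows "\<exists>K::real. K > 0 \<and>
    (\<forall>(\<epsilon>::real) (r::real) (p::complex poly) (\<alpha>::complex).
       0 < \<epsilon> \<and> \<epsilon> < 1 \<and> r > 1 \<and> degree p = d \<and> lead_coeff p = 1 \<and>
       {z. poly p z = \<alpha>} \<subseteq> ball 0 r \<and>
       setdist {z. poly p z = \<alpha>} (Crit p) > \<epsilon> \<longrightarrow>
       (\<forall>z w. poly p z = \<alpha> \<and> poly p w = \<alpha> \<and> z \<noteq> w \<longrightarrow>
          cmod (z - w) > K * (\<epsilon> / r) ^ (d^2)))"
proof (intro exI[of _ "1/2^d"] conjI allI impI)
  show "(0::real) < 1/2^d" by simp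
  fix e r :: real and p :: "complex poly" and \<alpha> z w :: complex
  assume H: "0 < e \<and> e < 1 \<and> r > 1 \<and> degree p = d \<and> lead_coeff p = 1 \<and>
       {z. poly p z = \<alpha>} \<subseteq> ball 0 r \<and> setdist {z. poly p z = \<alpha>} (Crit p) > e"
  assume Z: "poly p z = \<alpha> \<and> poly p w = \<alpha> \<and> z \<noteq> w"
  have d1: "d > 1" by fact
  define q where "q = p - [:\<alpha>:]"
  have dq: "degree q = d" proof -
    have "q = p + [:-\<alpha>:]" by (simp add: q_def)
    thus ?thesis using H d1 by (simp add: degree_add_eq_left)
  qed
  have c0: "coeff [:\<alpha>:] d = 0" using d1 by (cases d) auto
  have lq: "lead_coeff q = 1" using dq H c0 by (metis coeff_diff diff_zero q_def)
  have pq: "pderiv q = pderiv p" by (simp add: q_def pderiv_diff pderiv_pCons)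
  have rq: "poly q x = 0 \<longleftrightarrow> poly p x = \<alpha>" for x by (simp add: q_def)
  have far: "e < cmod (x - c)" if "poly p x = \<alpha>" "poly (pderiv p) c = 0" for x c
  proof -
    have "setdist {z. poly p z = \<alpha>} (Crit p) \<le> dist x c"
      by (rule setdist_le_dist) (use that in \<open>auto simp: Crit_def\<close>)
    thus ?thesis using H by (simp add: dist_norm)
  qed
  have sf: "rsquarefree q" unfolding rsquarefree_roots pq rq
    using far H by fastforce
  have L: "real d * e ^ (d - 1) \<le> cmod (poly (pderiv p) z)"
    by (rule deriv_lower[of p d]) (use H d1 far Z in \<open>auto intro: less_imp_le\<close>)
  have U: "cmod (poly (pderiv q) z) \<le> cmod (z - w) * (2*r) ^ (d - 2)"
    by (rule deriv_upper[OF dq lq sf]) (use H Z rq in auto)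
  show "cmod (z - w) > 1/2^d * (e / r) ^ (d^2)"
    by (rule final_arith) (use d1 H L U pq in auto)
qed

end
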